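(* Let $\Theta$ be a compact subset of $(0,1/2)\times(\mathbb{R}^2\setminus\Delta)$, $\Delta=\{(x,x):x\in\mathbb{R}\}$, and let $P<1/2$ be such that $p\le P$ for all $(p,\alpha,\beta)\in\Theta$. Let $g$ be a probability density on $\mathbb{R}$ of the form $g(x)=p_0f(x-\alpha_0)+(1-p_0)f(x-\beta_0)$ with $(p_0,\alpha_0,\beta_0)\in\Theta$ and $f$ a probability density, and let $X_1,\dots,X_n$ be real numbers (observations). For $\theta=(p,\alpha,\beta)\in\Theta$, $u\in\mathbb{R}$, let $M(\theta,u)=pe^{iu\alpha}+(1-p)e^{iu\beta}$, $$Z_k(\theta,u)=\frac{e^{iuX_k}}{M(\theta,u)}-\frac{e^{-iuX_k}}{M(\theta,-u)},\qquad J(\theta,u)=\frac{g^*(u)}{M(\theta,u)}-\frac{g^*(-u)}{M(\theta,-u)},$$ and let $\dot Z_k,\dot J$ and $\ddot Z_k$ denote the gradients and the Hessian with respect to $\theta$. Then for all $u\in\mathbb{R}$ and all $k\in\{1,\dots,n\}$: 1. $\max\{\sup_{\theta\in\Theta}|Z_k(\theta,u)|,\sup_{\theta\in\Theta}|J(\theta,u)|\}\le\frac{2}{1-2P}$; 2. $\max\{\sup_{\theta\in\Theta}\|\dot Z_k(\theta,u)\|,\sup_{\theta\in\Theta}\|\dot J(\theta,u)\|\}\le\frac{4(1+|u|)}{(1-2P)^2}$; 3. $\|\ddot Z_k(\theta,u)\|_2\le\frac{C(1+|u|+u^2)}{(1-2P)^3}$ for some absolute constant $C>0$ and all $\theta\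in\Theta$.
   Context: $g^*(u)=\int e^{ixu}g(x)\,dx$ is the Fourier transform; $\|v\|$ is the Euclidean (Hermitian) norm of a vector and $\|A\|_2^2=\mathrm{tr}(A^\top A)$ for a matrix $A$. *)

theory Defs
  imports "HOL-Analysis.Analysis"
begin

text \<open>Parameters theta = (p, alpha, beta) are encoded as vectors in real^3:
  theta$1 = p, theta$2 = alpha, theta$3 = beta.\<close>

definition prob_density :: "(real \<Rightarrow> real) \<Rightarrow> bool" where
  "prob_density f \<longleftrightarrow> f \<in> borel_measurable lborel \<and> (\<forall>x. 0 \<le> f x)
      \<and> integrable lborel f \<and> integral\<^sup>L lborel f = 1"

definition fourier :: "(real \<Rightarrow> real) \<Rightarrow> real \<Rightarrow> complex" where
  "fourier g u = integral\<^sup>L lborel (\<lambda>x. cis (u * x) * complex_of_real (g x))"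

definition Mfun :: "real^3 \<Rightarrow> real \<Rightarrow> complex" where
  "Mfun \<theta> u = complex_of_real (\<theta>$1) * cis (u * \<theta>$2)
             + complex_of_real (1 - \<theta>$1) * cis (u * \<theta>$3)"

definition Zfun :: "real \<Rightarrow> real^3 \<Rightarrow> real \<Rightarrow> complex" where
  "Zfun x \<theta> u = cis (u * x) / Mfun \<theta> u - cis (- u * x) / Mfun \<theta> (- u)"

definition Jfun :: "(real \<Rightarrow> real) \<Rightarrow> real^3 \<Rightarrow> real \<Rightarrow> complex" where
  "Jfun g \<theta> u = fourier g u / Mfun \<theta> u - fourier g (- u) / Mfun \<theta> (- u)"

definition partial :: "3 \<Rightarrow> (real^3 \<Rightarrow> complex) \<Rightarrow> real^3 \<Rightarrow> complex" where
  "partial i F \<theta> = frechet_derivative F (at \<theta>) (axis i 1)"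

text \<open>Gradient as a vector in complex^3 (its norm is the Hermitian norm) and Hessian as a
  complex 3x3 matrix (its norm is the Frobenius norm sqrt(sum |a_ij|^2)).\<close>
definition grad :: "(real^3 \<Rightarrow> complex) \<Rightarrow> real^3 \<Rightarrow> complex^3" where
  "grad F \<theta> = (\<chi> i. partial i F \<theta>)"

definition hessian :: "(real^3 \<Rightarrow> complex) \<Rightarrow> real^3 \<Rightarrow> complex^3^3" where
  "hessian F \<theta> = (\<chi> i j. partial j (partial i F) \<theta>)"

end

theory Submission imports Defs begin
lemma hd_nth: "((\<lambda>t::real^3. t$i) has_derivative (\<lambda>h. h$i)) F"
  by (rule bounded_linear_imp_has_derivative) auto

definition Mp :: "real \<Rightarrow> 3 \<Rightarrow> real^3 \<Rightarrow> complex" where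
  "Mp u j t = (if j = 1 then cis (u * t$2) - cis (u * t$3)
     else if j = 2 then complex_of_real (t$1) * (\<i> * u) * cis (u * t$2)
     else complex_of_real (1 - t$1) * (\<i> * u) * cis (u * t$3))"

definition Mpp :: "real \<Rightarrow> 3 \<Rightarrow> 3 \<Rightarrow> real^3 \<Rightarrow> complex" where
  "Mpp u j i t = (if j = 1 then (if i = 1 then 0 else if i = 2 then (\<i> * u) * cis (u * t$2) else - (\<i> * u) * cis (u * t$3))
     else if j = 2 then (if i = 1 then (\<i> * u) * cis (u * t$2) else if i = 2 then complex_of_real (t$1) * (\<i> * u)^2 * cis (u * t$2) else 0)
     else (if i = 1 then - (\<i> * u) * cis (u * t$3) else if i = 2 then 0 else complex_of_real (1 - t$1) * (\<i> * u)^2 * cis (u * t$3)))"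

lemma M_deriv: "((\<lambda>t. Mfun t u) has_derivative (\<lambda>h. \<Sum>i\<in>UNIV. complex_of_real (h$i) * Mp u i t)) (at t)"
  unfolding Mfun_def
  apply (rule has_derivative_eq_rhs)
   apply (rule derivative_eq_intros hd_nth refl | simp)+
  apply (rule ext)
  apply (simp add: sum_3 Mp_def scaleR_conv_of_real algebra_simps)
  done

lemma Mp_deriv: "((\<lambda>t. Mp u j t) has_derivative (\<lambda>h. \<Sum>i\<in>UNIV. complex_of_real (h$i) * Mpp u j i t)) (at t)"
proof -
  consider "j = 1" | "j = 2" | "j = 3" using exhaust_3 by blast
  then show ?thesis
  proof cases
    case 1 show ?thesis unfolding 1 Mp_def
      apply simp
      apply (rule has_derivative_eq_rhs)
       apply (rule derivative_eq_intros hd_nth refl | simp)+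
      apply (rule ext)
      apply (simp add: sum_3 Mpp_def scaleR_conv_of_real algebra_simps)
      done
  next
    case 2 show ?thesis unfolding 2 Mp_def
      apply simp
      apply (rule has_derivative_eq_rhs)
       apply (rule derivative_eq_intros hd_nth refl | simp)+
      apply (rule ext)
      apply (simp add: sum_3 Mpp_def scaleR_conv_of_real algebra_simps power2_eq_square)
      done
  next
    case 3 show ?thesis unfolding 3 Mp_def
      apply simp
      apply (rule has_derivative_eq_rhs)
       apply (rule derivative_eq_intros hd_nth refl | simp)+
      apply (rule ext)
      apply (simp add: sum_3 Mpp_def scaleR_conv_of_real algebra_simps power2_eq_square)
      done
  qed
qed


definition Qp :: "real \<Rightarrow> complex \<Rightarrow> 3 \<Rightarrow> real^3 \<Rightarrow> complex" where
  "Qp u c j t = - c * Mp u j t / (Mfun t u)^2"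

definition Qpp :: "real \<Rightarrow> complex \<Rightarrow> 3 \<Rightarrow> 3 \<Rightarrow> real^3 \<Rightarrow> complex" where
  "Qpp u c j i t = - c * Mpp u j i t / (Mfun t u)^2 + 2 * c * Mp u j t * Mp u i t / (Mfun t u)^3"

lemma Q_deriv:
  assumes "Mfun t u \<noteq> 0"
  shows "((\<lambda>t. c / Mfun t u) has_derivative (\<lambda>h. \<Sum>i\<in>UNIV. complex_of_real (h$i) * Qp u c i t)) (at t)"
  apply (rule has_derivative_eq_rhs)
   apply (rule derivative_eq_intros M_deriv refl assms | simp)+
  apply (rule ext)
  using assms apply (simp add: sum_3 Qp_def field_simps power2_eq_square)
  done

lemma Qp_deriv:
  assumes "Mfun t u \<noteq> 0"
  shows "((\<lambda>t. Qp u c j t) has_derivative (\<lambda>h. \<Sum>i\<in>UNIV. complex_of_real (h$i) * Qpp u c j i t)) (at t)"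
  unfolding Qp_def
  apply (rule has_derivative_eq_rhs)
   apply (rule derivative_eq_intros M_deriv Mp_deriv refl assms | simp add: assms)+
  apply (rule ext)
  using assms apply (simp add: sum_3 Qpp_def field_simps power2_eq_square power3_eq_cube)
  done

lemma partial_eq:
  assumes "(F has_derivative (\<lambda>h. \<Sum>i\<in>UNIV. complex_of_real (h$i) * D i)) (at t)"
  shows "partial j F t = D j"
proof -
  have "partial j F t = (\<lambda>h. \<Sum>i\<in>UNIV. complex_of_real (h$i) * D i) (axis j 1)"
    unfolding partial_def using frechet_derivative_at[OF assms] by metis
  also have "\<dots> = (\<Sum>i\<in>UNIV. if i = j then D i else 0)"
    by (rule sum.cong) (auto simp: axis_def)
  also have "\<dots> = D j" by simp
  finally show ?thesis .
qed

lemma M_cont: "continuous (at t) (\<lambda>t. Mfun t u)"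
  using M_deriv has_derivative_continuous by blast

lemma open_S: "open {t. Mfun t u \<noteq> 0 \<and> Mfun t (-u) \<noteq> 0}"
proof -
  have "{t. Mfun t u \<noteq> 0 \<and> Mfun t (-u) \<noteq> 0} = (\<lambda>t. Mfun t u) -` (-{0}) \<inter> (\<lambda>t. Mfun t (-u)) -` (-{0})"
    by auto
  moreover have "open ((\<lambda>t. Mfun t u) -` (-{0}))" "open ((\<lambda>t. Mfun t (-u)) -` (-{0}))"
    by (auto intro!: continuous_open_vimage simp: M_cont)
  ultimately show ?thesis by auto
qed

lemma cmod_1_minus[simp]: "cmod (1 - complex_of_real x) = \<bar>1 - x\<bar>"
  by (metis of_real_1 of_real_diff norm_of_real)

lemma M_lower:
  assumes "0 \<le> t$1" "t$1 \<le> 1"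
  shows "1 - 2 * t$1 \<le> cmod (Mfun t u)"
proof -
  have "cmod (complex_of_real (1 - t$1) * cis (u * t$3)) - cmod (complex_of_real (t$1) * cis (u * t$2))
        \<le> cmod (complex_of_real (1 - t$1) * cis (u * t$3) + complex_of_real (t$1) * cis (u * t$2))"
    by (rule norm_diff_ineq)
  then show ?thesis using assms by (simp add: Mfun_def norm_mult add.commute)
qed

lemma Mp_bound1: "0 \<le> t$1 \<Longrightarrow> t$1 \<le> 1 \<Longrightarrow> cmod (Mp u 1 t) \<le> 2"
  unfolding Mp_def using norm_triangle_ineq4[of "cis (u * t$2)" "cis (u * t$3)"] by simp

lemma Mp_bound23: "0 \<le> t$1 \<Longrightarrow> t$1 \<le> 1 \<Longrightarrow> j \<noteq> 1 \<Longrightarrow> cmod (Mp u j t) \<le> \<bar>u\<bar>"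
  unfolding Mp_def by (auto simp: norm_mult mult_le_cancel_right1 intro: mult_left_le_one_le)

lemma Mp_bound: "0 \<le> t$1 \<Longrightarrow> t$1 \<le> 1 \<Longrightarrow> cmod (Mp u j t) \<le> 2 + \<bar>u\<bar>"
  using Mp_bound1[where t=t and u=u] Mp_bound23[where t=t and u=u and j=j] by (cases "j = 1") auto

lemma aux_sq: "0 \<le> a \<Longrightarrow> a \<le> 1 \<Longrightarrow> a * (u::real)^2 \<le> \<bar>u\<bar> + u^2"
proof -
  assume "0 \<le> a" "a \<le> 1"
  then have "a * u^2 \<le> u^2" by (simp add: mult_left_le_one_le)
  then show ?thesis by simp
qed

lemma Mpp_bound: "0 \<le> t$1 \<Longrightarrow> t$1 \<le> 1 \<Longrightarrow> cmod (Mpp u j i t) \<le> \<bar>u\<bar> + u^2"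
  unfolding Mpp_def
  by (auto simp: norm_mult norm_power mult_le_cancel_right1 intro: aux_sq)


lemma Qp_bound:
  assumes c: "cmod c \<le> 1" and d: "0 < d" "d \<le> cmod (Mfun t u)"
  shows "cmod (Qp u c j t) \<le> cmod (Mp u j t) / d^2"
proof -
  have "cmod (Qp u c j t) = cmod c * cmod (Mp u j t) / cmod (Mfun t u)^2"
    by (simp add: Qp_def norm_mult norm_divide norm_power)
  also have "\<dots> \<le> 1 * cmod (Mp u j t) / d^2"
    apply (rule frac_le)
    using c d by (auto intro: mult_left_le_one_le power_mono)
  finally show ?thesis by simp
qed

lemma Qpp_bound:
  assumes c: "cmod c \<le> 1" and d: "0 < d" "d \<le> cmod (Mfun t u)" "d \<le> 1"
    and t: "0 \<le> t$1" "t$1 \<le> 1"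
  shows "cmod (Qpp u c j i t) \<le> 9 * (1 + \<bar>u\<bar> + u^2) / d^3"
proof -
  have M0: "0 < cmod (Mfun t u)" using d by linarith
  have "cmod (- c * Mpp u j i t / (Mfun t u)^2) = cmod c * cmod (Mpp u j i t) / cmod (Mfun t u)^2"
    by (simp add: norm_mult norm_divide norm_power)
  also have "\<dots> \<le> 1 * (\<bar>u\<bar> + u^2) / d^2"
    apply (rule frac_le)
    using c d Mpp_bound[OF t, of u j i] mult_mono[of "cmod c" 1 "cmod (Mpp u j i t)" "\<bar>u\<bar> + u^2"]
    by (auto intro: power_mono)
  also have "\<dots> \<le> (1 + \<bar>u\<bar> + u^2) / d^2"
    by (rule divide_right_mono) auto
  also have "\<dots> \<le> (1 + \<bar>u\<bar> + u^2) / d^3"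
  proof (rule divide_left_mono)
    show "d^3 \<le> d^2" using d by (simp add: power_decreasing)
  qed (use d in auto)
  finally have A: "cmod (- c * Mpp u j i t / (Mfun t u)^2) \<le> (1 + \<bar>u\<bar> + u^2) / d^3" .
  have "cmod (2 * c * Mp u j t * Mp u i t / (Mfun t u)^3)
        = 2 * cmod c * cmod (Mp u j t) * cmod (Mp u i t) / cmod (Mfun t u)^3"
    by (simp add: norm_mult norm_divide norm_power)
  also have "\<dots> \<le> 2 * 1 * (2 + \<bar>u\<bar>) * (2 + \<bar>u\<bar>) / d^3"
    apply (rule frac_le)
    using c d Mp_bound[OF t, of u j] Mp_bound[OF t, of u i]
      mult_mono[of "cmod c" 1 "cmod (Mp u j t)" "2 + \<bar>u\<bar>"]
    by (auto intro!: mult_mono power_mono)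
  also have "\<dots> \<le> 8 * (1 + \<bar>u\<bar> + u^2) / d^3"
    apply (rule divide_right_mono)
    using d by (auto simp: power2_eq_square algebra_simps)
  finally have B: "cmod (2 * c * Mp u j t * Mp u i t / (Mfun t u)^3) \<le> 8 * (1 + \<bar>u\<bar> + u^2) / d^3" .
  have "cmod (Qpp u c j i t) \<le> cmod (- c * Mpp u j i t / (Mfun t u)^2) + cmod (2 * c * Mp u j t * Mp u i t / (Mfun t u)^3)"
    unfolding Qpp_def by (rule norm_triangle_ineq)
  also have "\<dots> \<le> (1 + \<bar>u\<bar> + u^2) / d^3 + 8 * (1 + \<bar>u\<bar> + u^2) / d^3"
    using A B by linarith
  also have "\<dots> = 9 * (1 + \<bar>u\<bar> + u^2) / d^3" by (simp add: add_divide_distrib[symmetric])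
  finally show ?thesis .
qed


lemma F_deriv:
  assumes "Mfun t u \<noteq> 0" "Mfun t (-u) \<noteq> 0"
  shows "((\<lambda>t. c1 / Mfun t u - c2 / Mfun t (-u)) has_derivative
           (\<lambda>h. \<Sum>i\<in>UNIV. complex_of_real (h$i) * (Qp u c1 i t - Qp (-u) c2 i t))) (at t)"
  apply (rule has_derivative_eq_rhs[OF has_derivative_diff[OF Q_deriv[OF assms(1)] Q_deriv[OF assms(2)]]])
  apply (simp add: sum_subtractf[symmetric] right_diff_distrib)
  done

lemma partialF:
  assumes "Mfun t u \<noteq> 0" "Mfun t (-u) \<noteq> 0"
  shows "partial i (\<lambda>t. c1 / Mfun t u - c2 / Mfun t (-u)) t = Qp u c1 i t - Qp (-u) c2 i t"
  by (rule partial_eq[OF F_deriv[OF assms]])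

lemma hessF:
  assumes "Mfun t u \<noteq> 0" "Mfun t (-u) \<noteq> 0"
  shows "partial j (partial i (\<lambda>t. c1 / Mfun t u - c2 / Mfun t (-u))) t = Qpp u c1 i j t - Qpp (-u) c2 i j t"
proof (rule partial_eq)
  have D: "((\<lambda>t. Qp u c1 i t - Qp (-u) c2 i t) has_derivative
           (\<lambda>h. \<Sum>k\<in>UNIV. complex_of_real (h$k) * (Qpp u c1 i k t - Qpp (-u) c2 i k t))) (at t)"
    apply (rule has_derivative_eq_rhs[OF has_derivative_diff[OF Qp_deriv[OF assms(1)] Qp_deriv[OF assms(2)]]])
    apply (simp add: sum_subtractf[symmetric] right_diff_distrib)
    done
  show "(partial i (\<lambda>t. c1 / Mfun t u - c2 / Mfun t (-u)) has_derivative
           (\<lambda>h. \<Sum>k\<in>UNIV. complex_of_real (h$k) * (Qpp u c1 i k t - Qpp (-u) c2 i k t))) (at t)"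
    apply (rule has_derivative_transform_within_open[OF D open_S[of u]])
    using assms apply simp
    apply (simp add: partialF)
    done
qed


lemma norm_vec3: "norm (v :: 'a::real_normed_vector^3) = sqrt ((norm (v$1))^2 + (norm (v$2))^2 + (norm (v$3))^2)"
  by (simp add: norm_vec_def L2_set_def sum_3)

lemma norm_le_sum_cart: "norm (v :: 'a::real_normed_vector^'n) \<le> (\<Sum>i\<in>UNIV. norm (v$i))"
  unfolding norm_vec_def by (rule L2_set_le_sum) auto

lemma gen:
  fixes u :: real and c1 c2 :: complex and \<theta> :: "real^3" and P :: real
  assumes c1: "cmod c1 \<le> 1" and c2: "cmod c2 \<le> 1"
    and p: "0 < \<theta>$1" "\<theta>$1 \<le> P" "P < 1/2"
  defines "F \<equiv> (\<lambda>t. c1 / Mfun t u - c2 / Mfun t (-u))"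
  shows "cmod (F \<theta>) \<le> 2 / (1 - 2*P)"
    and "norm (grad F \<theta>) \<le> 4 * (1 + \<bar>u\<bar>) / (1 - 2*P)^2"
    and "norm (hessian F \<theta>) \<le> 162 * (1 + \<bar>u\<bar> + u^2) / (1 - 2*P)^3"
proof -
  define d where "d = 1 - 2*P"
  have d0: "0 < d" and d1: "d \<le> 1" using p by (auto simp: d_def)
  have t: "0 \<le> \<theta>$1" "\<theta>$1 \<le> 1" using p by auto
  have dM1: "d \<le> cmod (Mfun \<theta> u)" using M_lower[OF t, of u] p by (simp add: d_def)
  have dM2: "d \<le> cmod (Mfun \<theta> (-u))" using M_lower[OF t, of "-u"] p by (simp add: d_def)
  have M1: "Mfun \<theta> u \<noteq> 0" and M2: "Mfun \<theta> (-u) \<noteq> 0" using d0 dM1 dM2 by auto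
  have q: "cmod (c / Mfun \<theta> v) \<le> 1 / d" if "cmod c \<le> 1" "d \<le> cmod (Mfun \<theta> v)" for c v
    unfolding norm_divide by (rule frac_le) (use that d0 in auto)
  have "cmod (F \<theta>) \<le> cmod (c1 / Mfun \<theta> u) + cmod (c2 / Mfun \<theta> (-u))"
    unfolding F_def by (rule norm_triangle_ineq4)
  also have "\<dots> \<le> 1/d + 1/d" using q[OF c1 dM1] q[OF c2 dM2] by linarith
  finally show "cmod (F \<theta>) \<le> 2 / (1 - 2*P)" by (simp add: d_def)
next
  define d where "d = 1 - 2*P"
  have d0: "0 < d" and d1: "d \<le> 1" using p by (auto simp: d_def)
  have t: "0 \<le> \<theta>$1" "\<theta>$1 \<le> 1" using p by auto
  have dM1: "d \<le> cmod (Mfun \<theta> u)" using M_lower[OF t, of u] p by (simp add: d_def)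
  have dM2: "d \<le> cmod (Mfun \<theta> (-u))" using M_lower[OF t, of "-u"] p by (simp add: d_def)
  have M1: "Mfun \<theta> u \<noteq> 0" and M2: "Mfun \<theta> (-u) \<noteq> 0" using d0 dM1 dM2 by auto
  have gj: "grad F \<theta> $ j = Qp u c1 j \<theta> - Qp (-u) c2 j \<theta>" for j
    unfolding grad_def F_def using partialF[OF M1 M2] by simp
  have a: "cmod (grad F \<theta> $ j) \<le> cmod (Mp u j \<theta>) / d^2 + cmod (Mp (-u) j \<theta>) / d^2" for j
    unfolding gj using norm_triangle_ineq4[of "Qp u c1 j \<theta>" "Qp (-u) c2 j \<theta>"]
      Qp_bound[OF c1 d0 dM1, of j] Qp_bound[OF c2 d0 dM2, of j] by linarith
  define x where "x = 1 / d^2"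
  have x0: "0 \<le> x" by (simp add: x_def)
  have dv: "cmod (Mp v j \<theta>) / d^2 \<le> b * x" if "cmod (Mp v j \<theta>) \<le> b" for v j b
  proof -
    have "cmod (Mp v j \<theta>) / d^2 \<le> b / d^2" by (rule divide_right_mono[OF that]) simp
    then show ?thesis by (simp add: x_def)
  qed
  have a1: "cmod (grad F \<theta> $ 1) \<le> 4 * x"
    using a[of 1] dv[OF Mp_bound1[OF t, of u]] dv[OF Mp_bound1[OF t, of "-u"]] by linarith
  have a23: "cmod (grad F \<theta> $ j) \<le> 2 * \<bar>u\<bar> * x" if "j \<noteq> 1" for j
    using a[of j] dv[OF Mp_bound23[OF t that, of u]] dv[OF Mp_bound23[OF t that, of "-u"]] by simp
  have s1: "(cmod (grad F \<theta> $ 1))^2 \<le> (4 * x)^2"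
    by (rule power_mono[OF a1]) simp
  have s2: "(cmod (grad F \<theta> $ 2))^2 \<le> (2 * \<bar>u\<bar> * x)^2"
    by (rule power_mono[OF a23]) auto
  have s3: "(cmod (grad F \<theta> $ 3))^2 \<le> (2 * \<bar>u\<bar> * x)^2"
    by (rule power_mono[OF a23]) auto
  have "(4 * x)^2 + (2 * \<bar>u\<bar> * x)^2 + (2 * \<bar>u\<bar> * x)^2 = (16 + 8 * u^2) * x^2"
    by (simp add: power2_eq_square algebra_simps)
  also have "\<dots> \<le> (16 * (1 + \<bar>u\<bar>)^2) * x^2"
    by (rule mult_right_mono) (auto simp: power2_eq_square algebra_simps)
  also have "\<dots> = (4 * (1 + \<bar>u\<bar>) * x)^2" by (simp add: power2_eq_square algebra_simps)
  finally have "norm (grad F \<theta>) \<le> sqrt ((4 * (1 + \<bar>u\<bar>) * x)^2)"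
    unfolding norm_vec3 using s1 s2 s3 by (intro real_sqrt_le_mono) linarith
  also have "\<dots> = 4 * (1 + \<bar>u\<bar>) * x" using x0 by simp
  finally show "norm (grad F \<theta>) \<le> 4 * (1 + \<bar>u\<bar>) / (1 - 2*P)^2" by (simp add: x_def d_def)
next
  define d where "d = 1 - 2*P"
  have d0: "0 < d" and d1: "d \<le> 1" using p by (auto simp: d_def)
  have t: "0 \<le> \<theta>$1" "\<theta>$1 \<le> 1" using p by auto
  have dM1: "d \<le> cmod (Mfun \<theta> u)" using M_lower[OF t, of u] p by (simp add: d_def)
  have dM2: "d \<le> cmod (Mfun \<theta> (-u))" using M_lower[OF t, of "-u"] p by (simp add: d_def)
  have M1: "Mfun \<theta> u \<noteq> 0" and M2: "Mfun \<theta> (-u) \<noteq> 0" using d0 dM1 dM2 by auto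
  define B where "B = (1 + \<bar>u\<bar> + u^2) / d^3"
  have hij: "hessian F \<theta> $ i $ j = Qpp u c1 i j \<theta> - Qpp (-u) c2 i j \<theta>" for i j
    unfolding hessian_def F_def using hessF[OF M1 M2] by simp
  have e: "cmod (hessian F \<theta> $ i $ j) \<le> 18 * B" for i j
  proof -
    have "cmod (hessian F \<theta> $ i $ j) \<le> cmod (Qpp u c1 i j \<theta>) + cmod (Qpp (-u) c2 i j \<theta>)"
      unfolding hij by (rule norm_triangle_ineq4)
    also have "\<dots> \<le> 9 * B + 9 * B"
    proof -
      have X: "9 * (1 + \<bar>u\<bar> + u^2) / d^3 = 9 * B" by (simp add: B_def)
      have Y: "9 * (1 + \<bar>-u\<bar> + (-u)^2) / d^3 = 9 * B" by (simp add: B_def)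
      show ?thesis
        using Qpp_bound[OF c1 d0 dM1 d1 t, of i j] Qpp_bound[OF c2 d0 dM2 d1 t, of i j] X Y
        by linarith
    qed
    finally show ?thesis by simp
  qed
  have "norm (hessian F \<theta>) \<le> (\<Sum>i\<in>UNIV. norm (hessian F \<theta> $ i))" by (rule norm_le_sum_cart)
  also have "\<dots> \<le> (\<Sum>i\<in>(UNIV::3 set). \<Sum>j\<in>(UNIV::3 set). cmod (hessian F \<theta> $ i $ j))"
    by (rule sum_mono) (rule norm_le_sum_cart)
  also have "\<dots> \<le> (\<Sum>i\<in>(UNIV::3 set). \<Sum>j\<in>(UNIV::3 set). 18 * B)"
    by (intro sum_mono e)
  also have "\<dots> = 162 * B" by simp
  finally show "norm (hessian F \<theta>) \<le> 162 * (1 + \<bar>u\<bar> + u^2) / (1 - 2*P)^3"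
    by (simp add: B_def d_def)
qed


lemma fourier_bound:
  assumes "prob_density g"
  shows "cmod (fourier g v) \<le> 1"
proof -
  have "cmod (fourier g v) \<le> (\<integral>x. norm (cis (v * x) * complex_of_real (g x)) \<partial>lborel)"
    unfolding fourier_def by (rule integral_norm_bound)
  also have "(\<integral>x. norm (cis (v * x) * complex_of_real (g x)) \<partial>lborel) = (\<integral>x. g x \<partial>lborel)"
    using assms unfolding prob_density_def by (intro Bochner_Integration.integral_cong) (auto simp: norm_mult)
  also have "\<dots> = 1" using assms unfolding prob_density_def by simp
  finally show ?thesis .
qed

theorem lemma1:
  shows "\<exists>C>0. \<forall>(\<Theta>::(real^3) set) (P::real) (f::real \<Rightarrow> real) (g::real \<Rightarrow> real)
            (p0::real) (a0::real) (b0::real) (X::nat \<Rightarrow> real) (n::nat).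
     compact \<Theta>
     \<and> \<Theta> \<subseteq> {\<theta>. 0 < \<theta>$1 \<and> \<theta>$1 < 1/2 \<and> \<theta>$2 \<noteq> \<theta>$3}
     \<and> P < 1/2 \<and> (\<forall>\<theta>\<in>\<Theta>. \<theta>$1 \<le> P)
     \<and> prob_density f \<and> prob_density g
     \<and> vector [p0, a0, b0] \<in> \<Theta>
     \<and> (\<forall>x. g x = p0 * f (x - a0) + (1 - p0) * f (x - b0))
     \<longrightarrow> (\<forall>(u::real) k. k \<in> {1..n} \<longrightarrow>
            (\<forall>\<theta>\<in>\<Theta>. cmod (Zfun (X k) \<theta> u) \<le> 2 / (1 - 2*P)
                    \<and> cmod (Jfun g \<theta> u) \<le> 2 / (1 - 2*P))
          \<and> (\<forall>\<theta>\<in>\<Theta>. norm (grad (\<lambda>t. Zfun (X k) t u) \<theta>) \<le> 4 * (1 + \<bar>u\<bar>) / (1 - 2*P)^2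
                    \<and> norm (grad (\<lambda>t. Jfun g t u) \<theta>) \<le> 4 * (1 + \<bar>u\<bar>) / (1 - 2*P)^2)
          \<and> (\<forall>\<theta>\<in>\<Theta>. norm (hessian (\<lambda>t. Zfun (X k) t u) \<theta>)
                      \<le> C * (1 + \<bar>u\<bar> + u^2) / (1 - 2*P)^3))"
proof (rule exI[of _ 162], intro conjI allI impI ballI)
  fix \<Theta> :: "(real^3) set" and P :: real and f g :: "real \<Rightarrow> real" and p0 a0 b0 :: real
    and X :: "nat \<Rightarrow> real" and n :: nat and u :: real and k :: nat and \<theta> :: "real^3"
  assume H: "compact \<Theta>
     \<and> \<Theta> \<subseteq> {\<theta>. 0 < \<theta>$1 \<and> \<theta>$1 < 1/2 \<and> \<theta>$2 \<noteq> \<theta>$3}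
     \<and> P < 1/2 \<and> (\<forall>\<theta>\<in>\<Theta>. \<theta>$1 \<le> P)
     \<and> prob_density f \<and> prob_density g
     \<and> vector [p0, a0, b0] \<in> \<Theta>
     \<and> (\<forall>x. g x = p0 * f (x - a0) + (1 - p0) * f (x - b0))"
    and th: "\<theta> \<in> \<Theta>"
  have p: "0 < \<theta>$1" "\<theta>$1 \<le> P" "P < 1/2" using H th by auto
  have pg: "prob_density g" using H by blast
  have Zeq: "(\<lambda>t. Zfun (X k) t u) = (\<lambda>t. cis (u * X k) / Mfun t u - cis (- u * X k) / Mfun t (-u))"
    by (rule ext) (simp add: Zfun_def)
  have Jeq: "(\<lambda>t. Jfun g t u) = (\<lambda>t. fourier g u / Mfun t u - fourier g (- u) / Mfun t (-u))"
    by (rule ext) (simp add: Jfun_def)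
  note GZ = gen[of "cis (u * X k)" "cis (- u * X k)" \<theta> P u, OF _ _ p, simplified]
  note GJ = gen[OF fourier_bound[OF pg] fourier_bound[OF pg] p, of u]
  show "cmod (Zfun (X k) \<theta> u) \<le> 2 / (1 - 2*P)"
    using GZ(1) by (simp add: Zfun_def)
  show "cmod (Jfun g \<theta> u) \<le> 2 / (1 - 2*P)"
    using GJ(1) by (simp add: Jfun_def)
  show "norm (grad (\<lambda>t. Zfun (X k) t u) \<theta>) \<le> 4 * (1 + \<bar>u\<bar>) / (1 - 2*P)^2"
    unfolding Zeq using GZ(2) by simp
  show "norm (grad (\<lambda>t. Jfun g t u) \<theta>) \<le> 4 * (1 + \<bar>u\<bar>) / (1 - 2*P)^2"
    unfolding Jeq using GJ(2) by simp
  show "norm (hessian (\<lambda>t. Zfun (X k) t u) \<theta>) \<le> 162 * (1 + \<bar>u\<bar> + u^2) / (1 - 2*P)^3"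
    unfolding Zeq using GZ(3) by simp
qed simp

end
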